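(* For every set of formulas $\Gamma\cup\{\varphi\}\subseteq For$: $\Gamma \vdash_{\bf Dm} \varphi$ if and only if there exists a set of formulas $\Upsilon$ such that $\Gamma\cup\{\circ \delta \ : \ \delta \in \Upsilon\} \vdash_{\bf Km} \varphi$, where $\circ\delta:=\Box\delta\to\Diamond\delta$.
   Context: Formulas are built from a denumerable set of propositional variables by the unary connectives $\neg$, $\Box$ and the binary connective $\to$; $For$ is the set of all formulas. Abbreviations: $\Diamond\alpha:=\neg\Box\neg\alpha$, $\alpha\vee\beta:=\neg\alpha\to\beta$, $\alpha\wedge\beta:=\neg(\alpha\to\neg\beta)$. All Hilbert calculi below have as axioms all instances (over $For$) of the axiom schemas of a standard Hilbert calculus for classical propositional logic in the signature $\{\neg,\to\}$, plus the listed modal schemas, with modus ponens as the only rule; $\Gamma\vdash_{\bf L}\alpha$ means there is a derivation of $\alpha$ from $\Gamma$ in ${\bf L}$. ${\bf Km}$: (K') $\Diamond\alpha\to(\Box(\alpha\to\beta)\to(\Box\alpha\to\Box\beta))$; (K1') $\Diamond\neg\beta\to(\Box(\alpha\to\beta)\to(\Diamond\alpha\to\Diamond\beta))$; (K2') $\Diamond\alpha\to(\Diamond(\alpha\to\beta)\to(\Box\alpha\to\Diamond\beta))$; (M3') $(\Diamond\alpha\vee\Diamond\neg\alpha)\to(\Diamond\beta\to\Diamond(\alpha\to\beta))$; (M4') $\Diamond\neg\beta\to(\Diamond\neg\alpha\to\Diamond(\alpha\to\beta))$; (I1) $(\Box\alpha\wedge\Box\neg\alpha)\to(\Box(\alpha\to\beta)\wedge\Box\neg(\alpha\to\beta))$;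 (I2) $(\Box\beta\wedge\Box\neg\beta)\to(\Box(\alpha\to\beta)\wedge\Box\neg(\alpha\to\beta))$; (M1) $\neg\Diamond\alpha\to\Box(\alpha\to\beta)$; (M2) $\Box\beta\to\Box(\alpha\to\beta)$; (DN1) $\Box\alpha\to\Box\neg\neg\alpha$; (DN2) $\Box\neg\neg\alpha\to\Box\alpha$. ${\bf Dm}$: (K) $\Box(\alpha\to\beta)\to(\Box\alpha\to\Box\beta)$; (K1) $\Box(\alpha\to\beta)\to(\Diamond\alpha\to\Diamond\beta)$; (K2) $\Diamond(\alpha\to\beta)\to(\Box\alpha\to\Diamond\beta)$; (M1); (M2); (M3) $\Diamond\beta\to\Diamond(\alpha\to\beta)$; (M4) $\Diamond\neg\alpha\to\Diamond(\alpha\to\beta)$; (DN1); (DN2); (D) $\Box\alpha\to\Diamond\alpha$. *)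

theory Defs
  imports Main
begin

datatype fm = Var nat | Neg fm | Box fm | Imp fm fm

definition Dia :: "fm \<Rightarrow> fm" where "Dia a = Neg (Box (Neg a))"
definition Or :: "fm \<Rightarrow> fm \<Rightarrow> fm" where "Or a b = Imp (Neg a) b"
definition And :: "fm \<Rightarrow> fm \<Rightarrow> fm" where "And a b = Neg (Imp a (Neg b))"
definition Circ :: "fm \<Rightarrow> fm" where "Circ d = Imp (Box d) (Dia d)"

text \<open>Standard Hilbert calculus for classical propositional logic in the signature
  neg, imp (Lukasiewicz / Mendelson style axioms).\<close>
inductive_set CPL_ax :: "fm set" where
  A1: "Imp a (Imp b a) \<in> CPL_ax"
| A2: "Imp (Imp a (Imp b c)) (Imp (Imp a b) (Imp a c)) \<in> CPL_ax"
| A3: "Imp (Imp (Neg b) (Neg a)) (Imp (Imp (Neg b) a) b) \<in> CPL_ax"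

inductive_set Km_ax :: "fm set" where
  Kp: "Imp (Dia a) (Imp (Box (Imp a b)) (Imp (Box a) (Box b))) \<in> Km_ax"
| K1p: "Imp (Dia (Neg b)) (Imp (Box (Imp a b)) (Imp (Dia a) (Dia b))) \<in> Km_ax"
| K2p: "Imp (Dia a) (Imp (Dia (Imp a b)) (Imp (Box a) (Dia b))) \<in> Km_ax"
| M3p: "Imp (Or (Dia a) (Dia (Neg a))) (Imp (Dia b) (Dia (Imp a b))) \<in> Km_ax"
| M4p: "Imp (Dia (Neg b)) (Imp (Dia (Neg a)) (Dia (Imp a b))) \<in> Km_ax"
| I1: "Imp (And (Box a) (Box (Neg a))) (And (Box (Imp a b)) (Box (Neg (Imp a b)))) \<in> Km_ax"
| I2: "Imp (And (Box b) (Box (Neg b))) (And (Box (Imp a b)) (Box (Neg (Imp a b)))) \<in> Km_ax"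
| M1: "Imp (Neg (Dia a)) (Box (Imp a b)) \<in> Km_ax"
| M2: "Imp (Box b) (Box (Imp a b)) \<in> Km_ax"
| DN1: "Imp (Box a) (Box (Neg (Neg a))) \<in> Km_ax"
| DN2: "Imp (Box (Neg (Neg a))) (Box a) \<in> Km_ax"

inductive_set Dm_ax :: "fm set" where
  K: "Imp (Box (Imp a b)) (Imp (Box a) (Box b)) \<in> Dm_ax"
| K1: "Imp (Box (Imp a b)) (Imp (Dia a) (Dia b)) \<in> Dm_ax"
| K2: "Imp (Dia (Imp a b)) (Imp (Box a) (Dia b)) \<in> Dm_ax"
| M1: "Imp (Neg (Dia a)) (Box (Imp a b)) \<in> Dm_ax"
| M2: "Imp (Box b) (Box (Imp a b)) \<in> Dm_ax"
| M3: "Imp (Dia b) (Dia (Imp a b)) \<in> Dm_ax"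
| M4: "Imp (Dia (Neg a)) (Dia (Imp a b)) \<in> Dm_ax"
| DN1: "Imp (Box a) (Box (Neg (Neg a))) \<in> Dm_ax"
| DN2: "Imp (Box (Neg (Neg a))) (Box a) \<in> Dm_ax"
| D: "Imp (Box a) (Dia a) \<in> Dm_ax"

inductive derives :: "fm set \<Rightarrow> fm set \<Rightarrow> fm \<Rightarrow> bool" for Ax :: "fm set" where
  prem: "a \<in> G \<Longrightarrow> derives Ax G a"
| cpl: "a \<in> CPL_ax \<Longrightarrow> derives Ax G a"
| ax: "a \<in> Ax \<Longrightarrow> derives Ax G a"
| mp: "derives Ax G (Imp a b) \<Longrightarrow> derives Ax G a \<Longrightarrow> derives Ax G b"

abbreviation derives_Km :: "fm set \<Rightarrow> fm \<Rightarrow> bool" where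
  "derives_Km G a \<equiv> derives Km_ax G a"
abbreviation derives_Dm :: "fm set \<Rightarrow> fm \<Rightarrow> bool" where
  "derives_Dm G a \<equiv> derives Dm_ax G a"

end

theory Submission
  imports Defs
begin

lemma A1d: "derives Ax G (Imp a (Imp b a))"
  by (rule derives.cpl, rule CPL_ax.A1)
lemma A2d: "derives Ax G (Imp (Imp a (Imp b c)) (Imp (Imp a b) (Imp a c)))"
  by (rule derives.cpl, rule CPL_ax.A2)
lemma A3d: "derives Ax G (Imp (Imp (Neg b) (Neg a)) (Imp (Imp (Neg b) a) b))"
  by (rule derives.cpl, rule CPL_ax.A3)

lemma mono: "derives Ax G a \<Longrightarrow> G \<subseteq> H \<Longrightarrow> derives Ax H a"
  by (induction rule: derives.induct) (auto intro: derives.intros)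

lemma ident: "derives Ax G (Imp a a)"
  by (meson A1d A2d derives.mp)

lemma weak1: "derives Ax G b \<Longrightarrow> derives Ax G (Imp a b)"
  by (meson A1d derives.mp)

lemma dt: "derives Ax (insert a G) b \<Longrightarrow> derives Ax G (Imp a b)"
proof (induction "insert a G" b rule: derives.induct)
  case (prem b)
  then show ?case by (metis ident weak1 derives.prem insertE)
next
  case (cpl b)
  then show ?case by (meson weak1 derives.cpl)
next
  case (ax b)
  then show ?case by (meson weak1 derives.ax)
next
  case (mp b c)
  then show ?case by (meson A2d derives.mp)
qed

lemma pr: "derives Ax (insert a G) a" by (rule derives.prem) simp
lemma up: "derives Ax G a \<Longrightarrow> derives Ax (insert b G) a" by (erule mono) auto

lemma efq: "derives Ax G (Neg a) \<Longrightarrow> derives Ax G a \<Longrightarrow> derives Ax G b"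
  by (meson A3d weak1 derives.mp)

lemma dne: "derives Ax G (Neg (Neg a)) \<Longrightarrow> derives Ax G a"
proof -
  assume h: "derives Ax G (Neg (Neg a))"
  have "derives Ax G (Imp (Imp (Neg a) (Neg (Neg a))) (Imp (Imp (Neg a) (Neg a)) a))" by (rule A3d)
  then show ?thesis by (meson h weak1 ident derives.mp)
qed

lemma contra: "derives Ax G (Imp P Q) \<Longrightarrow> derives Ax G (Imp (Neg Q) (Neg P))"
proof -
  assume h: "derives Ax G (Imp P Q)"
  have "derives Ax (insert (Neg (Neg P)) (insert (Neg Q) G)) Q"
    by (meson h up pr dne derives.mp)
  then have 1: "derives Ax (insert (Neg Q) G) (Imp (Neg (Neg P)) Q)" by (rule dt)
  have 2: "derives Ax (insert (Neg Q) G) (Imp (Neg (Neg P)) (Neg Q))" by (rule weak1, rule pr)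
  have "derives Ax (insert (Neg Q) G) (Neg P)"
    by (meson 1 2 A3d derives.mp)
  then show ?thesis by (rule dt)
qed

lemma cases_lem: "derives Ax G (Imp P Q) \<Longrightarrow> derives Ax G (Imp (Neg P) Q) \<Longrightarrow> derives Ax G Q"
proof -
  assume h1: "derives Ax G (Imp P Q)" and h2: "derives Ax G (Imp (Neg P) Q)"
  have a: "derives Ax G (Imp (Neg Q) (Neg P))" using h1 by (rule contra)
  have b: "derives Ax G (Imp (Neg Q) (Neg (Neg P)))" using h2 by (rule contra)
  have "derives Ax G (Imp (Imp (Neg Q) (Neg (Neg P))) (Imp (Imp (Neg Q) (Neg P)) Q))" by (rule A3d)
  then show ?thesis by (meson a b derives.mp)
qed

lemma andE1: "derives Ax G (Neg (Imp P (Neg Q))) \<Longrightarrow> derives Ax G P"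
proof -
  assume h: "derives Ax G (Neg (Imp P (Neg Q)))"
  have "derives Ax (insert P (insert (Neg P) G)) (Neg Q)"
    by (meson efq pr up)
  then have "derives Ax (insert (Neg P) G) (Imp P (Neg Q))" by (rule dt)
  then have "derives Ax (insert (Neg P) G) P" by (meson efq h up)
  then have "derives Ax G (Imp (Neg P) P)" by (rule dt)
  then show ?thesis by (meson cases_lem ident)
qed

lemma andE2: "derives Ax G (Neg (Imp P (Neg Q))) \<Longrightarrow> derives Ax G Q"
proof -
  assume h: "derives Ax G (Neg (Imp P (Neg Q)))"
  have "derives Ax (insert (Neg Q) G) (Imp P (Neg Q))"
    by (meson weak1 pr)
  then have "derives Ax (insert (Neg Q) G) Q" by (meson efq h up)
  then have "derives Ax G (Imp (Neg Q) Q)" by (rule dt)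
  then show ?thesis by (meson cases_lem ident)
qed

lemma circ: "(\<And>d. Circ d \<in> G) \<Longrightarrow> derives Km_ax G (Imp (Box d) (Dia d))"
  by (metis Circ_def derives.prem)

lemma Dm_in_Km:
  assumes hC: "\<And>d. Circ d \<in> G" and a: "x \<in> Dm_ax"
  shows "derives Km_ax G x"
  using a
proof cases
  case (K a b)
  have c: "\<And>d. Circ d \<in> insert (Box a) (insert (Box (Imp a b)) G)" using hC by simp
  have "derives Km_ax (insert (Box a) (insert (Box (Imp a b)) G)) (Box b)"
    by (meson pr up circ[OF c] derives.mp derives.ax Km_ax.Kp)
  then show ?thesis using K by (meson dt)
next
  case (K1 a b)
  let ?g = "Imp (Box (Imp a b)) (Imp (Dia a) (Dia b))"
  have 1: "derives Km_ax G (Imp (Dia (Neg b)) ?g)" by (rule derives.ax, rule Km_ax.K1p)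
  have c: "\<And>d. Circ d \<in> insert (Neg (Dia (Neg b))) G" using hC by simp
  have "derives Km_ax (insert (Neg (Dia (Neg b))) G) (Neg (Neg (Box (Neg (Neg b)))))"
    using pr unfolding Dia_def .
  then have "derives Km_ax (insert (Neg (Dia (Neg b))) G) (Box (Neg (Neg b)))" by (rule dne)
  then have "derives Km_ax (insert (Neg (Dia (Neg b))) G) (Box b)"
    by (meson derives.mp derives.ax Km_ax.DN2)
  then have "derives Km_ax (insert (Neg (Dia (Neg b))) G) (Dia b)"
    by (meson derives.mp circ[OF c])
  then have "derives Km_ax (insert (Neg (Dia (Neg b))) G) ?g"
    by (meson weak1)
  then have 2: "derives Km_ax G (Imp (Neg (Dia (Neg b))) ?g)" by (rule dt)
  show ?thesis using K1 cases_lem[OF 1 2] by simp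
next
  case (K2 a b)
  have c: "\<And>d. Circ d \<in> insert (Box a) (insert (Dia (Imp a b)) G)" using hC by simp
  have "derives Km_ax (insert (Box a) (insert (Dia (Imp a b)) G)) (Dia b)"
    by (meson pr up circ[OF c] derives.mp derives.ax Km_ax.K2p)
  then show ?thesis using K2 by (meson dt)
next
  case (M1 a b)
  then show ?thesis by (simp add: derives.ax Km_ax.M1)
next
  case (M2 b a)
  then show ?thesis by (simp add: derives.ax Km_ax.M2)
next
  case (M3 b a)
  have c: "\<And>d. Circ d \<in> insert (Neg (Dia a)) G" using hC by simp
  have "derives Km_ax (insert (Neg (Dia a)) G) (Neg (Neg (Box (Neg a))))"
    using pr unfolding Dia_def .
  then have "derives Km_ax (insert (Neg (Dia a)) G) (Box (Neg a))" by (rule dne)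
  then have "derives Km_ax (insert (Neg (Dia a)) G) (Dia (Neg a))"
    by (meson derives.mp circ[OF c])
  then have "derives Km_ax G (Or (Dia a) (Dia (Neg a)))" unfolding Or_def by (rule dt)
  then show ?thesis using M3 by (meson derives.mp derives.ax Km_ax.M3p)
next
  case (M4 a b)
  let ?g = "Imp (Dia (Neg a)) (Dia (Imp a b))"
  have 1: "derives Km_ax G (Imp (Dia (Neg b)) ?g)" by (rule derives.ax, rule Km_ax.M4p)
  have c: "\<And>d. Circ d \<in> insert (Neg (Dia (Neg b))) G" using hC by simp
  have "derives Km_ax (insert (Neg (Dia (Neg b))) G) (Neg (Neg (Box (Neg (Neg b)))))"
    using pr unfolding Dia_def .
  then have "derives Km_ax (insert (Neg (Dia (Neg b))) G) (Box (Neg (Neg b)))" by (rule dne)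
  then have "derives Km_ax (insert (Neg (Dia (Neg b))) G) (Box b)"
    by (meson derives.mp derives.ax Km_ax.DN2)
  then have "derives Km_ax (insert (Neg (Dia (Neg b))) G) (Box (Imp a b))"
    by (meson derives.mp derives.ax Km_ax.M2)
  then have "derives Km_ax (insert (Neg (Dia (Neg b))) G) (Dia (Imp a b))"
    by (meson derives.mp circ[OF c])
  then have "derives Km_ax (insert (Neg (Dia (Neg b))) G) ?g"
    by (meson weak1)
  then have 2: "derives Km_ax G (Imp (Neg (Dia (Neg b))) ?g)" by (rule dt)
  show ?thesis using M4 cases_lem[OF 1 2] by simp
next
  case (DN1 a)
  then show ?thesis by (simp add: derives.ax Km_ax.DN1)
next
  case (DN2 a)
  then show ?thesis by (simp add: derives.ax Km_ax.DN2)
next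
  case (D a)
  then show ?thesis using circ[OF hC] by simp
qed

lemma incons_Dm:
  "derives Dm_ax G (Imp (And (Box a) (Box (Neg a))) z)"
proof -
  let ?H = "insert (And (Box a) (Box (Neg a))) G"
  have h: "derives Dm_ax ?H (Neg (Imp (Box a) (Neg (Box (Neg a)))))"
    using pr unfolding And_def .
  have 1: "derives Dm_ax ?H (Box a)" using h by (rule andE1)
  have 2: "derives Dm_ax ?H (Box (Neg a))" using h by (rule andE2)
  have 3: "derives Dm_ax ?H (Neg (Box (Neg (Neg a))))"
    using derives.mp[OF derives.ax[OF Dm_ax.D] 2] unfolding Dia_def .
  have 4: "derives Dm_ax ?H (Box (Neg (Neg a)))"
    using derives.mp[OF derives.ax[OF Dm_ax.DN1] 1] .
  have "derives Dm_ax ?H z" using efq[OF 3 4] .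
  then show ?thesis by (rule dt)
qed

lemma Km_in_Dm:
  assumes a: "x \<in> Km_ax"
  shows "derives Dm_ax G x"
  using a
proof cases
  case (Kp a b) then show ?thesis by (meson weak1 derives.ax Dm_ax.K)
next
  case (K1p b a) then show ?thesis by (meson weak1 derives.ax Dm_ax.K1)
next
  case (K2p a b) then show ?thesis by (meson weak1 derives.ax Dm_ax.K2)
next
  case (M3p a b) then show ?thesis by (meson weak1 derives.ax Dm_ax.M3)
next
  case (M4p b a) then show ?thesis by (meson weak1 derives.ax Dm_ax.M4)
next
  case (I1 a b) then show ?thesis by (simp add: incons_Dm)
next
  case (I2 b a) then show ?thesis by (simp add: incons_Dm)
next
  case (M1 a b) then show ?thesis by (simp add: derives.ax Dm_ax.M1)
next
  case (M2 b a) then show ?thesis by (simp add: derives.ax Dm_ax.M2)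
next
  case (DN1 a) then show ?thesis by (simp add: derives.ax Dm_ax.DN1)
next
  case (DN2 a) then show ?thesis by (simp add: derives.ax Dm_ax.DN2)
qed

lemma fwd: "derives Dm_ax \<Gamma> \<phi> \<Longrightarrow> derives Km_ax (\<Gamma> \<union> {Circ \<delta> | \<delta>. \<delta> \<in> UNIV}) \<phi>"
proof (induction rule: derives.induct)
  case (prem a) then show ?case by (simp add: derives.prem)
next
  case (cpl a) then show ?case by (rule derives.cpl)
next
  case (ax a) then show ?case by (intro Dm_in_Km) auto
next
  case (mp a b) then show ?case by (meson derives.mp)
qed

lemma bwd: "derives Km_ax H \<phi> \<Longrightarrow> (\<forall>x\<in>H. x \<in> \<Gamma> \<or> (\<exists>d. x = Circ d)) \<Longrightarrow> derives Dm_ax \<Gamma> \<phi>"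
proof (induction rule: derives.induct)
  case (prem a) then show ?case
    by (metis Circ_def derives.prem derives.ax Dm_ax.D)
next
  case (cpl a) then show ?case by (simp add: derives.cpl)
next
  case (ax a) then show ?case by (simp add: Km_in_Dm)
next
  case (mp a b) then show ?case by (meson derives.mp)
qed

theorem mainTheorem3:
  fixes \<Gamma> :: "fm set" and \<phi> :: fm
  shows "derives_Dm \<Gamma> \<phi> \<longleftrightarrow> (\<exists>\<Upsilon>. derives_Km (\<Gamma> \<union> {Circ \<delta> | \<delta>. \<delta> \<in> \<Upsilon>}) \<phi>)"
proof
  assume "derives_Dm \<Gamma> \<phi>"
  then show "\<exists>\<Upsilon>. derives_Km (\<Gamma> \<union> {Circ \<delta> | \<delta>. \<delta> \<in> \<Upsilon>}) \<phi>" using fwd by blast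
next
  assume "\<exists>\<Upsilon>. derives_Km (\<Gamma> \<union> {Circ \<delta> | \<delta>. \<delta> \<in> \<Upsilon>}) \<phi>"
  then obtain U where "derives_Km (\<Gamma> \<union> {Circ \<delta> | \<delta>. \<delta> \<in> U}) \<phi>" by blast
  then show "derives_Dm \<Gamma> \<phi>" by (rule bwd) blast
qed

end
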